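(* A locally connected Hausdorff space $X$ has a Hausdorff one-point connectification if and only if $X$ has no almost compact component.
   Context: A one-point connectification of a space $X$ is a connected space $Y$ which contains $X$ as a dense subspace and such that $Y\setminus X$ is a singleton. A space $X$ is almost compact if for every open cover $\mathscr{U}$ of $X$ there is a finite subcollection $\mathscr{V}\subseteq\mathscr{U}$ with $X=\mathrm{cl}_X\bigcup\mathscr{V}$. *)

theory Defs
  imports "HOL-Analysis.Analysis"
begin

definition almost_compact_space :: "'a topology \<Rightarrow> bool" where
  "almost_compact_space X \<longleftrightarrow>
     (\<forall>\<U>. (\<forall>U\<in>\<U>. openin X U) \<and> topspace X \<subseteq> \<Union>\<U> \<longrightarrow>
        (\<exists>\<V>. finite \<V> \<and> \<V> \<subseteq> \<U> \<and> X closure_of (\<Union>\<V>) = topspace X))"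

definition one_point_connectification :: "'a topology \<Rightarrow> 'b topology \<Rightarrow> ('a \<Rightarrow> 'b) \<Rightarrow> bool" where
  "one_point_connectification X Y f \<longleftrightarrow>
     connected_space Y \<and> embedding_map X Y f \<and>
     Y closure_of (f ` topspace X) = topspace Y \<and>
     (\<exists>p. topspace Y - f ` topspace X = {p})"

text \<open>Existence of a Hausdorff one-point connectification. The new space is
realised on the type 'a option (any one-point extension can be transported there).\<close>
definition has_Hausdorff_one_point_connectification :: "'a topology \<Rightarrow> bool" where
  "has_Hausdorff_one_point_connectification X \<longleftrightarrow>
     (\<exists>(Y::'a option topology) f. one_point_connectification X Y f \<and> Hausdorff_space Y)"

end

theory Submission
  imports Defs
begin
lemma fwd_dir:
  assumes lc: "locally_connected_space X" and oc: "one_point_connectification X Y f"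
    and H: "Hausdorff_space Y"
    and C: "C \<in> connected_components_of X" and ac: "almost_compact_space (subtopology X C)"
  shows False
proof -
  let ?T = "f ` topspace X"
  have conn: "connected_space Y" and emb: "embedding_map X Y f"
    and dens: "Y closure_of ?T = topspace Y"
    using oc by (auto simp: one_point_connectification_def)
  obtain p where p: "topspace Y - ?T = {p}" using oc by (auto simp: one_point_connectification_def)
  have hom: "homeomorphic_map X (subtopology Y ?T) f" using emb by (simp add: embedding_map_def)
  have contS: "continuous_map X (subtopology Y ?T) f" using hom homeomorphic_imp_continuous_map by blast
  then have cont: "continuous_map X Y f" by (simp add: continuous_map_in_subtopology)
  have TY: "?T \<subseteq> topspace Y" using cont by (meson continuous_map_image_subset_topspace)
  have pY: "p \<in> topspace Y" "p \<notin> ?T" using p by auto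
  have Teq: "?T = topspace Y - {p}" using p TY by auto
  have openT: "openin Y ?T"
    using Teq closedin_Hausdorff_singleton[OF H pY(1)] by (simp add: openin_diff)
  have CX: "C \<subseteq> topspace X" "openin X C" "closedin X C" "C \<noteq> {}"
    using connected_components_of_subset[OF C] openin_connected_components_of_locally_connected_space[OF lc C]
      closedin_connected_components_of[OF C] nonempty_connected_components_of[OF C] by auto
  have topT: "topspace (subtopology Y ?T) = ?T" using TY by auto
  have oC: "openin Y (f ` C)"
    using homeomorphic_map_openness[OF hom CX(1)] CX(2) openT openin_trans_full by blast
  have cC: "closedin (subtopology Y ?T) (f ` C)"
    using homeomorphic_map_closedness[OF hom CX(1)] CX(3) by blast
  have oTC: "openin Y (?T - f ` C)"
    using cC openT openin_trans_full topT by (metis closedin_def)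
  have "\<forall>x\<in>C. \<exists>U V. openin Y U \<and> openin Y V \<and> f x \<in> U \<and> p \<in> V \<and> disjnt U V"
  proof
    fix x assume "x \<in> C"
    then have "f x \<in> topspace Y" "f x \<noteq> p" using CX(1) TY pY by auto
    then show "\<exists>U V. openin Y U \<and> openin Y V \<and> f x \<in> U \<and> p \<in> V \<and> disjnt U V"
      using H pY(1) unfolding Hausdorff_space_def by blast
  qed
  then obtain U V where UV: "\<And>x. x \<in> C \<Longrightarrow> openin Y (U x) \<and> openin Y (V x) \<and> f x \<in> U x \<and> p \<in> V x \<and> disjnt (U x) (V x)"
    by metis
  define g where "g x = C \<inter> f -` U x" for x
  have gopen: "openin (subtopology X C) (g x)" if "x \<in> C" for x
  proof -
    have "openin X {y \<in> topspace X. f y \<in> U x}"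
      using openin_continuous_map_preimage[OF cont] UV that by blast
    then have "openin (subtopology X C) ({y \<in> topspace X. f y \<in> U x} \<inter> C)"
      by (rule openin_subtopology_Int)
    moreover have "{y \<in> topspace X. f y \<in> U x} \<inter> C = g x" using CX(1) by (auto simp: g_def)
    ultimately show ?thesis by simp
  qed
  have topC: "topspace (subtopology X C) = C" using CX(1) by auto
  have cov: "topspace (subtopology X C) \<subseteq> \<Union>(g ` C)"
    using UV by (auto simp: topC g_def)
  obtain \<V> where V: "finite \<V>" "\<V> \<subseteq> g ` C" "(subtopology X C) closure_of (\<Union>\<V>) = C"
    using ac cov gopen unfolding almost_compact_space_def topC by (metis (no_types, lifting) image_iff topC)
  obtain F where F: "F \<subseteq> C" "finite F" "\<V> = g ` F"
    using V finite_subset_image by metis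
  define W where "W = topspace Y \<inter> \<Inter>(V ` F)"
  have Wo: "openin Y W" unfolding W_def
    using F UV by (intro openin_Int_Inter) auto
  have pW: "p \<in> W" using pY F UV by (auto simp: W_def)
  have WC: "W \<inter> f ` C = {}"
  proof (rule ccontr)
    assume "W \<inter> f ` C \<noteq> {}"
    then obtain y where y: "y \<in> C" "f y \<in> W" by auto
    have ycl: "y \<in> (subtopology X C) closure_of (\<Union>\<V>)" using V(3) y by simp
    have "openin X {z \<in> topspace X. f z \<in> W}"
      using openin_continuous_map_preimage[OF cont Wo] .
    then have "openin (subtopology X C) ({z \<in> topspace X. f z \<in> W} \<inter> C)"
      by (rule openin_subtopology_Int)
    moreover have "y \<in> {z \<in> topspace X. f z \<in> W} \<inter> C" using y CX(1) by auto
    ultimately obtain z where z: "z \<in> \<Union>\<V>" "z \<in> {z \<in> topspace X. f z \<in> W} \<inter> C"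
      using ycl[unfolded in_closure_of] by (metis (no_types, lifting))
    then obtain x where x: "x \<in> F" "z \<in> g x" using F by auto
    then have "f z \<in> U x" by (simp add: g_def)
    moreover have "f z \<in> V x" using z x by (auto simp: W_def)
    ultimately show False using UV[of x] x F by (auto simp: disjnt_def)
  qed
  have "topspace Y - f ` C = (?T - f ` C) \<union> W"
  proof -
    have "W \<subseteq> topspace Y" using Wo openin_subset by blast
    then show ?thesis using WC Teq pW by blast
  qed
  then have "openin Y (topspace Y - f ` C)" using oTC Wo by auto
  then have "closedin Y (f ` C)" using oC openin_subset closedin_def by metis
  then have "f ` C = {} \<or> f ` C = topspace Y" using conn oC connected_space_clopen_in by metis
  moreover have "p \<notin> f ` C" using CX(1) pY by blast
  ultimately show False using CX(4) pY by blast
qed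

definition opc :: "'a topology \<Rightarrow> 'a set set \<Rightarrow> 'a option set \<Rightarrow> bool" where
  "opc X \<U> U \<longleftrightarrow> U \<subseteq> insert None (Some ` topspace X) \<and> openin X (Some -` U) \<and>
     (None \<in> U \<longrightarrow> (\<exists>\<V>. finite \<V> \<and> \<V> \<subseteq> \<U> \<and> topspace X - X closure_of \<Union>\<V> \<subseteq> Some -` U))"

lemma istopology_opc: "istopology (opc X \<U>)"
  unfolding istopology_def
proof (intro conjI allI impI)
  fix S T assume S: "opc X \<U> S" and T: "opc X \<U> T"
  have "openin X (Some -` (S \<inter> T))" using S T by (auto simp: opc_def vimage_Int)
  moreover have "\<exists>\<V>. finite \<V> \<and> \<V> \<subseteq> \<U> \<and> topspace X - X closure_of \<Union>\<V> \<subseteq> Some -` (S \<inter> T)"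
    if NST: "None \<in> S \<inter> T"
  proof -
    obtain \<V>1 where 1: "finite \<V>1" "\<V>1 \<subseteq> \<U>" "topspace X - X closure_of \<Union>\<V>1 \<subseteq> Some -` S"
      using S NST by (auto simp: opc_def)
    obtain \<V>2 where 2: "finite \<V>2" "\<V>2 \<subseteq> \<U>" "topspace X - X closure_of \<Union>\<V>2 \<subseteq> Some -` T"
      using T NST by (auto simp: opc_def)
    show ?thesis
      by (rule exI[of _ "\<V>1 \<union> \<V>2"]) (use 1 2 in auto)
  qed
  ultimately show "opc X \<U> (S \<inter> T)" using S T by (auto simp: opc_def)
next
  fix K assume K: "\<forall>S\<in>K. opc X \<U> S"
  have "Some -` \<Union>K = \<Union>((\<lambda>S. Some -` S) ` K)" by auto
  moreover have "openin X (\<Union>((\<lambda>S. Some -` S) ` K))" using K by (auto simp: opc_def)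
  ultimately have "openin X (Some -` \<Union>K)" by simp
  moreover have "\<exists>\<V>. finite \<V> \<and> \<V> \<subseteq> \<U> \<and> topspace X - X closure_of \<Union>\<V> \<subseteq> Some -` \<Union>K"
    if NK: "None \<in> \<Union>K"
  proof -
    obtain S where "S \<in> K" "None \<in> S" using NK by auto
    then obtain \<V> where "finite \<V>" "\<V> \<subseteq> \<U>" "topspace X - X closure_of \<Union>\<V> \<subseteq> Some -` S"
      using K by (auto simp: opc_def)
    then show ?thesis using \<open>S \<in> K\<close> by blast
  qed
  moreover have "\<Union>K \<subseteq> insert None (Some ` topspace X)" using K by (auto simp: opc_def)
  ultimately show "opc X \<U> (\<Union>K)" by (auto simp: opc_def)
qed

lemma openin_opc: "openin (topology (opc X \<U>)) = opc X \<U>"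
  using topology_inverse'[OF istopology_opc] .

lemma topspace_opc: "topspace (topology (opc X \<U>)) = insert None (Some ` topspace X)"
proof -
  have e: "Some -` insert None (Some ` topspace X) = topspace X" by auto
  have "opc X \<U> (insert None (Some ` topspace X))"
    unfolding opc_def e by (auto simp: opc_def inj_vimage_image_eq intro: exI[of _ "{}"])
  then have "insert None (Some ` topspace X) \<subseteq> topspace (topology (opc X \<U>))"
    using openin_subset[of "topology (opc X \<U>)"] unfolding openin_opc by blast
  moreover have "opc X \<U> (topspace (topology (opc X \<U>)))"
    using openin_topspace[of "topology (opc X \<U>)"] unfolding openin_opc .
  ultimately show ?thesis unfolding opc_def by blast
qed

lemma bwd_dir:
  fixes X :: "'a topology"
  assumes ne: "topspace X \<noteq> {}" and lc: "locally_connected_space X" and HX: "Hausdorff_space X"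
    and nac: "\<forall>C \<in> connected_components_of X. \<not> almost_compact_space (subtopology X C)"
  shows "has_Hausdorff_one_point_connectification X"
proof -
  have "\<forall>C\<in>connected_components_of X. \<exists>\<U>. (\<forall>U\<in>\<U>. openin X U \<and> U \<subseteq> C) \<and> C \<subseteq> \<Union>\<U> \<and>
          (\<forall>\<V>. finite \<V> \<and> \<V> \<subseteq> \<U> \<longrightarrow> \<not> C \<subseteq> X closure_of \<Union>\<V>)"
  proof
    fix C assume C: "C \<in> connected_components_of X"
    have CX: "C \<subseteq> topspace X" "openin X C"
      using connected_components_of_subset[OF C] openin_connected_components_of_locally_connected_space[OF lc C]
      by auto
    have topC: "topspace (subtopology X C) = C" using CX(1) by auto
    have nC: "\<not> almost_compact_space (subtopology X C)" using nac C by blast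
    have "\<exists>\<U>. (\<forall>U\<in>\<U>. openin (subtopology X C) U) \<and> C \<subseteq> \<Union>\<U> \<and>
      (\<forall>\<V>\<subseteq>\<U>. finite \<V> \<longrightarrow> (subtopology X C) closure_of \<Union>\<V> \<noteq> C)"
      using nC unfolding almost_compact_space_def topC by simp
    then obtain \<U> where U1: "\<forall>U\<in>\<U>. openin (subtopology X C) U" and U2: "C \<subseteq> \<Union>\<U>"
      and U3: "\<forall>\<V>\<subseteq>\<U>. finite \<V> \<longrightarrow> (subtopology X C) closure_of \<Union>\<V> \<noteq> C"
      by auto
    show "\<exists>\<U>. (\<forall>U\<in>\<U>. openin X U \<and> U \<subseteq> C) \<and> C \<subseteq> \<Union>\<U> \<and>
          (\<forall>\<V>. finite \<V> \<and> \<V> \<subseteq> \<U> \<longrightarrow> \<not> C \<subseteq> X closure_of \<Union>\<V>)"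
    proof (intro exI[of _ \<U>] conjI ballI allI impI)
      fix U assume "U \<in> \<U>"
      then have "openin (subtopology X C) U" using U1 by blast
      then show "openin X U" "U \<subseteq> C"
        using openin_trans_full[OF _ CX(2)] openin_subset[of "subtopology X C" U] topC by auto
    next
      show "C \<subseteq> \<Union>\<U>" by (rule U2)
    next
      fix \<V> assume "finite \<V> \<and> \<V> \<subseteq> \<U>"
      then have "(subtopology X C) closure_of \<Union>\<V> \<noteq> C" using U3 by simp
      moreover have "(subtopology X C) closure_of \<Union>\<V> = C \<inter> X closure_of \<Union>\<V>"
        using closure_of_subtopology_open CX(2) by blast
      ultimately show "\<not> C \<subseteq> X closure_of \<Union>\<V>" by blast
    qed
  qed
  then obtain cov where cov: "\<And>C. C\<in>connected_components_of X \<Longrightarrow>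
     (\<forall>U\<in>cov C. openin X U \<and> U \<subseteq> C) \<and> C \<subseteq> \<Union>(cov C) \<and>
          (\<forall>\<V>. finite \<V> \<and> \<V> \<subseteq> cov C \<longrightarrow> \<not> C \<subseteq> X closure_of \<Union>\<V>)"
    by metis
  define \<U> where "\<U> = \<Union>(cov ` connected_components_of X)"
  have key: "\<exists>x\<in>C. x \<notin> X closure_of \<Union>\<V>"
    if C: "C \<in> connected_components_of X" and fV: "finite \<V>" and sV: "\<V> \<subseteq> \<U>" for C \<V>
  proof -
    have CX: "C \<subseteq> topspace X" "openin X C"
      using connected_components_of_subset[OF C] openin_connected_components_of_locally_connected_space[OF lc C]
      by auto
    have "\<not> C \<subseteq> X closure_of \<Union>(\<V> \<inter> cov C)" using cov[OF C] fV by blast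
    then obtain x where x: "x \<in> C" "x \<notin> X closure_of \<Union>(\<V> \<inter> cov C)" by blast
    have sub2: "\<Union>(\<V> - cov C) \<subseteq> topspace X - C"
    proof
      fix z assume "z \<in> \<Union>(\<V> - cov C)"
      then obtain V where V: "V \<in> \<V>" "V \<notin> cov C" "z \<in> V" by blast
      then obtain D where D: "D \<in> connected_components_of X" "V \<in> cov D" using sV \<U>_def by blast
      then have "D \<noteq> C" using V by blast
      then have "disjnt D C" using connected_components_of_disjoint[OF D(1) C] by blast
      moreover have "V \<subseteq> D" using cov[OF D(1)] D(2) by blast
      moreover have "D \<subseteq> topspace X" using connected_components_of_subset[OF D(1)] .
      ultimately show "z \<in> topspace X - C" using V(3) by (auto simp: disjnt_def)
    qed
    have "closedin X (topspace X - C)" using CX(2) by (simp add: closedin_diff)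
    then have "X closure_of \<Union>(\<V> - cov C) \<subseteq> topspace X - C"
      using sub2 closure_of_minimal by blast
    moreover have "\<Union>\<V> = \<Union>(\<V> \<inter> cov C) \<union> \<Union>(\<V> - cov C)" by blast
    ultimately have "x \<notin> X closure_of \<Union>\<V>" using x by auto
    then show ?thesis using x by blast
  qed
  define Y where "Y = topology (opc X \<U>)"
  have oY: "openin Y = opc X \<U>" unfolding Y_def by (rule openin_opc)
  have tY: "topspace Y = insert None (Some ` topspace X)" unfolding Y_def by (rule topspace_opc)
  have nbhdNone: "\<exists>x\<in>C. Some x \<in> T"
    if T: "openin Y T" "None \<in> T" and C: "C \<in> connected_components_of X" for T C
  proof -
    obtain \<V> where V: "finite \<V>" "\<V> \<subseteq> \<U>" "topspace X - X closure_of \<Union>\<V> \<subseteq> Some -` T"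
      using T unfolding oY opc_def by blast
    obtain x where x: "x \<in> C" "x \<notin> X closure_of \<Union>\<V>" using key[OF C V(1,2)] by blast
    have "x \<in> topspace X" using x(1) connected_components_of_subset[OF C] by blast
    then show ?thesis using x V(3) by blast
  qed
  obtain C0 where C0: "C0 \<in> connected_components_of X"
    using ne Union_connected_components_of[of X] by blast
  have openSome: "openin Y (Some ` U)" if "openin X U" for U
  proof -
    have "Some -` Some ` U = U" by auto
    moreover have "U \<subseteq> topspace X" using that openin_subset by blast
    ultimately show ?thesis unfolding oY opc_def using that by auto
  qed
  have contS: "continuous_map X Y Some"
    unfolding continuous_map_def
  proof (intro conjI allI impI)
    show "Some \<in> topspace X \<rightarrow> topspace Y" using tY by auto
  next
    fix U assume "openin Y U"
    then have "openin X (Some -` U)" unfolding oY opc_def by blast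
    moreover have "{x \<in> topspace X. Some x \<in> U} = Some -` U"
      using calculation openin_subset by blast
    ultimately show "openin X {x \<in> topspace X. Some x \<in> U}" by simp
  qed
  have emb: "embedding_map X Y Some"
    by (rule injective_open_imp_embedding_map[OF contS]) (auto simp: open_map_def openSome)
  have dens: "Y closure_of (Some ` topspace X) = topspace Y"
  proof
    show "Y closure_of (Some ` topspace X) \<subseteq> topspace Y" by (rule closure_of_subset_topspace)
  next
    have s: "Some ` topspace X \<subseteq> topspace Y" using tY by auto
    have "None \<in> Y closure_of (Some ` topspace X)"
      unfolding in_closure_of
    proof (intro conjI allI impI)
      show "None \<in> topspace Y" using tY by auto
    next
      fix T assume "None \<in> T \<and> openin Y T"
      then obtain x where "x \<in> C0" "Some x \<in> T" using nbhdNone C0 by blast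
      then show "\<exists>y. y \<in> Some ` topspace X \<and> y \<in> T"
        using connected_components_of_subset[OF C0] by blast
    qed
    then show "topspace Y \<subseteq> Y closure_of (Some ` topspace X)"
      using closure_of_subset[OF s] tY by auto
  qed
  have rem: "topspace Y - Some ` topspace X = {None}" using tY by auto
  have sepNone: "\<exists>U V. openin Y U \<and> openin Y V \<and> Some a \<in> U \<and> None \<in> V \<and> disjnt U V"
    if a: "a \<in> topspace X" for a
  proof -
    obtain C where C: "C \<in> connected_components_of X" "a \<in> C"
      using a Union_connected_components_of[of X] by blast
    obtain U where U: "U \<in> cov C" "a \<in> U" using cov[OF C(1)] C(2) by blast
    have Uo: "openin X U" using cov[OF C(1)] U(1) by blast
    have UU: "U \<in> \<U>" using U(1) C(1) \<U>_def by blast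
    define W where "W = insert None (Some ` (topspace X - X closure_of U))"
    have e: "Some -` W = topspace X - X closure_of U" unfolding W_def by auto
    have "openin X (topspace X - X closure_of U)" by (simp add: openin_diff)
    moreover have "topspace X - X closure_of \<Union>{U} \<subseteq> Some -` W" using e by simp
    ultimately have Wo: "openin Y W"
      unfolding oY opc_def e using UU by (auto simp: W_def intro!: exI[of _ "{U}"])
    have "U \<subseteq> X closure_of U" using closure_of_subset[OF openin_subset[OF Uo]] .
    then have "disjnt (Some ` U) W" by (auto simp: W_def disjnt_def)
    moreover have "None \<in> W" "Some a \<in> Some ` U" using U(2) by (auto simp: W_def)
    ultimately show ?thesis using Wo openSome[OF Uo] by blast
  qed
  have HY: "Hausdorff_space Y"
    unfolding Hausdorff_space_def
  proof (intro allI impI)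
    fix x y assume xy: "x \<in> topspace Y \<and> y \<in> topspace Y \<and> x \<noteq> y"
    show "\<exists>U V. openin Y U \<and> openin Y V \<and> x \<in> U \<and> y \<in> V \<and> disjnt U V"
    proof (cases x)
      case None
      then obtain b where b: "y = Some b" "b \<in> topspace X" using xy tY by auto
      then show ?thesis using sepNone[OF b(2)] None by (metis disjnt_sym)
    next
      case (Some a)
      then have a: "a \<in> topspace X" using xy tY by auto
      show ?thesis
      proof (cases y)
        case None
        then show ?thesis using sepNone[OF a] Some by blast
      next
        case (Some b)
        then have b: "b \<in> topspace X" "a \<noteq> b" using xy tY \<open>x = Some a\<close> by auto
        then obtain U V where UV: "openin X U" "openin X V" "a \<in> U" "b \<in> V" "disjnt U V"
          using HX a unfolding Hausdorff_space_def by blast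
        have "disjnt (Some ` U) (Some ` V)" using UV(5) by (auto simp: disjnt_def)
        then show ?thesis using openSome UV \<open>x = Some a\<close> Some by blast
      qed
    qed
  qed
  have cloNone: "B = {}" if B: "openin Y B" "closedin Y B" "None \<notin> B" for B
  proof (rule ccontr)
    assume "B \<noteq> {}"
    define B' where "B' = Some -` B"
    have BY: "B \<subseteq> topspace Y" using B openin_subset by blast
    then have Beq: "B = Some ` B'" using B(3) tY unfolding B'_def by auto
    obtain x where x: "x \<in> B'" using \<open>B \<noteq> {}\<close> Beq by blast
    have B'o: "openin X B'" using B(1) unfolding oY opc_def B'_def by blast
    define A where "A = topspace Y - B"
    have Ao: "openin Y A" using B(2) unfolding A_def closedin_def by blast
    have NA: "None \<in> A" using B(3) tY unfolding A_def by auto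
    have B'X: "B' \<subseteq> topspace X" using B'o openin_subset by blast
    have Aeq: "Some -` A = topspace X - B'" unfolding A_def B'_def using tY by auto
    have "openin X (Some -` A)" using Ao unfolding oY opc_def by blast
    then have B'c: "closedin X B'" using B'X Aeq by (simp add: closedin_def)
    have xX: "x \<in> topspace X" using x B'X by blast
    define C where "C = connected_component_of_set X x"
    have C: "C \<in> connected_components_of X" using xX unfolding C_def connected_components_of_def by blast
    have "connectedin X C" by (simp add: C_def connectedin_connected_component_of)
    moreover have "x \<in> C" using xX by (simp add: C_def connected_component_of_refl)
    ultimately have CB: "C \<subseteq> B'" using connectedin_clopen_cases[OF _ B'c B'o] x
      by (metis disjnt_iff)
    obtain z where z: "z \<in> C" "Some z \<in> A" using nbhdNone[OF Ao NA C] by blast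
    then show False using CB Aeq by blast
  qed
  have conn: "connected_space Y"
    unfolding connected_space_clopen_in
  proof (intro allI impI)
    fix T assume T: "openin Y T \<and> closedin Y T"
    show "T = {} \<or> T = topspace Y"
    proof (cases "None \<in> T")
      case False
      then show ?thesis using cloNone T by blast
    next
      case True
      have "openin Y (topspace Y - T)" "closedin Y (topspace Y - T)"
        using T by (auto simp: openin_diff closedin_diff)
      then have "topspace Y - T = {}" using cloNone True by blast
      then show ?thesis using T openin_subset by blast
    qed
  qed
  have "one_point_connectification X Y Some"
    unfolding one_point_connectification_def using conn emb dens rem by blast
  then show ?thesis unfolding has_Hausdorff_one_point_connectification_def using HY by blast
qed

theorem theorem2p10:
  fixes X :: "'a topology"
  assumes "topspace X \<noteq> {}"
    and "locally_connected_space X"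
    and "Hausdorff_space X"
  shows "has_Hausdorff_one_point_connectification X \<longleftrightarrow>
         (\<forall>C \<in> connected_components_of X. \<not> almost_compact_space (subtopology X C))"
proof
  assume "has_Hausdorff_one_point_connectification X"
  then obtain Y :: "'a option topology" and f where
    "one_point_connectification X Y f" "Hausdorff_space Y"
    unfolding has_Hausdorff_one_point_connectification_def by blast
  then show "\<forall>C \<in> connected_components_of X. \<not> almost_compact_space (subtopology X C)"
    using fwd_dir[OF assms(2)] by blast
next
  assume "\<forall>C \<in> connected_components_of X. \<not> almost_compact_space (subtopology X C)"
  then show "has_Hausdorff_one_point_connectification X"
    using bwd_dir[OF assms] by blast
qed

end
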